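(* Let $f=\frac1n\sum_{i=1}^n f_i$ with $f_i:\mathbb{R}^d\to\mathbb{R}$ differentiable and let $x^*$ be the minimizer of $f$. Let $\mathcal G$ be a partition of $[n]$ into sets of size $\tau$, and let $S$ be a random set with $\Pr(S=C)=p_C>0$ for $C\in\mathcal G$, $\sum_{C\in\mathcal G}p_C=1$. Assume that for every $C\in\mathcal G$ the function $f_C=\frac{1}{|C|}\sum_{i\in C}f_i$ is $L_C$-smooth and $\mu$-strongly convex ($\mu>0$). Let $\{x^k,\mathbf J^k\}$ be the iterates of minibatch SAGA with sampling $S$ and stepsize $\alpha$, and let $S$ also denote a copy of the sampling independent of the iterates. Define the stochastic Lyapunov function $$\Psi_S^k=\|x^k-x^*\|_2^2+2\sigma_S\alpha\Big\|\tfrac1n\mathbf J^ke-\nabla f_{S,\mathbf J^k}(x^* )\Big\|_2^2,\qquad \sigma_S=\frac{n}{4\tau L_S}.$$ If $\alpha\le\min_{C\in\mathcal G}\frac{p_C}{\mu+4L_C\tau/n}$, then $\mathbb{E}[\Psi_S^k]\le(1-\mu\alpha)^k\,\mathbb{E}[\Psi_S^0]$. Consequently, if $\alpha$ equals this upper bound, then $k\ge\max_{C\in\mathcal G}\left\{\frac1{p_C}+\frac{4L_C}{\mu}\frac{\tau}{np_C}\right\}\log\frac1\epsilon$ implies $\mathbb{E}[\Psi_S^k]\le\epsilon\,\mathbb{E}[\Psi_S^0]$.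
   Context: $e\in\mathbb{R}^n$ is the all-ones vector, $\mathbf J_{:i}$ the $i$-th column of $\mathbf J\in\mathbb{R}^{d\times n}$. For $C\in\mathcal G$ and $\mathbf J\in\mathbb{R}^{d\times n}$, $\nabla f_{C,\mathbf J}(x)=\frac1n\mathbf Je+\frac{1}{np_C}\sum_{i\in C}(\nabla f_i(x)-\mathbf J_{:i})$. Minibatch SAGA (JacSketch with $\mathbf W=\mathbf I$, sketch $\mathbf S=\mathbf I_S$, $\theta=1/p_S$): given $x^0\in\mathbb{R}^d$, $\mathbf J^0\in\mathbb{R}^{d\times n}$, for $k=0,1,\dots$ sample $S_k$ (independent copy of $S$), set $g^k=\frac1n\mathbf J^ke+\frac1{np_{S_k}}\sum_{i\in S_k}(\nabla f_i(x^k)-\mathbf J^k_{:i})$, $\mathbf J^{k+1}_{:i}=\nabla f_i(x^k)$ for $i\in S_k$ and $\mathbf J^{k+1}_{:i}=\mathbf J^k_{:i}$ otherwise, and $x^{k+1}=x^k-\alpha g^k$. $\mathbb{E}$ is over all randomness (iterates and $S$). *)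

theory Defs
  imports "HOL-Analysis.Analysis" "HOL-Library.Disjoint_Sets"
begin

text \<open>Columns of the Jacobian estimate J in R^(d x n) are modelled as a function
  nat => 'a (column i is J i, only i < n matters).  Gradients of the f_i are given
  by gradf i.\<close>

definition smooth_with_grad :: "('a::real_normed_vector \<Rightarrow> 'a) \<Rightarrow> real \<Rightarrow> bool" where
  "smooth_with_grad Gr L \<longleftrightarrow> (\<forall>x y. norm (Gr x - Gr y) \<le> L * norm (x - y))"

definition strongly_convex_with_grad ::
  "('a::real_inner \<Rightarrow> real) \<Rightarrow> ('a \<Rightarrow> 'a) \<Rightarrow> real \<Rightarrow> bool" where
  "strongly_convex_with_grad F Gr \<mu> \<longleftrightarrow>
     (\<forall>x y. F y \<ge> F x + Gr x \<bullet> (y - x) + \<mu> / 2 * (norm (y - x))\<^sup>2)"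

definition fC :: "(nat \<Rightarrow> 'a \<Rightarrow> real) \<Rightarrow> nat set \<Rightarrow> 'a \<Rightarrow> real" where
  "fC f C x = (1 / real (card C)) * (\<Sum>i\<in>C. f i x)"

definition gradC :: "(nat \<Rightarrow> 'a \<Rightarrow> 'a::real_vector) \<Rightarrow> nat set \<Rightarrow> 'a \<Rightarrow> 'a" where
  "gradC gradf C x = (1 / real (card C)) *\<^sub>R (\<Sum>i\<in>C. gradf i x)"

definition Jmean :: "nat \<Rightarrow> (nat \<Rightarrow> 'a::real_vector) \<Rightarrow> 'a" where
  "Jmean n J = (1 / real n) *\<^sub>R (\<Sum>i<n. J i)"

definition grad_est :: "nat \<Rightarrow> (nat \<Rightarrow> 'a \<Rightarrow> 'a::real_vector) \<Rightarrow> (nat set \<Rightarrow> real)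
    \<Rightarrow> nat set \<Rightarrow> (nat \<Rightarrow> 'a) \<Rightarrow> 'a \<Rightarrow> 'a" where
  "grad_est n gradf p C J x =
     Jmean n J + (1 / (real n * p C)) *\<^sub>R (\<Sum>i\<in>C. (gradf i x - J i))"

definition saga_step :: "nat \<Rightarrow> (nat \<Rightarrow> 'a \<Rightarrow> 'a::real_vector) \<Rightarrow> (nat set \<Rightarrow> real) \<Rightarrow> real
    \<Rightarrow> 'a \<times> (nat \<Rightarrow> 'a) \<Rightarrow> nat set \<Rightarrow> 'a \<times> (nat \<Rightarrow> 'a)" where
  "saga_step n gradf p \<alpha> xJ C =
     (let x = fst xJ; J = snd xJ
      in (x - \<alpha> *\<^sub>R grad_est n gradf p C J x,
          (\<lambda>i. if i \<in> C then gradf i x else J i)))"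

text \<open>Iterates (x^k, J^k) as a function of the realised samples S_0, S_1, ...\<close>
fun saga_iter :: "nat \<Rightarrow> (nat \<Rightarrow> 'a \<Rightarrow> 'a::real_vector) \<Rightarrow> (nat set \<Rightarrow> real) \<Rightarrow> real
    \<Rightarrow> 'a \<Rightarrow> (nat \<Rightarrow> 'a) \<Rightarrow> (nat \<Rightarrow> nat set) \<Rightarrow> nat \<Rightarrow> 'a \<times> (nat \<Rightarrow> 'a)" where
  "saga_iter n gradf p \<alpha> x0 J0 s 0 = (x0, J0)"
| "saga_iter n gradf p \<alpha> x0 J0 s (Suc k) =
     saga_step n gradf p \<alpha> (saga_iter n gradf p \<alpha> x0 J0 s k) (s k)"

definition saga_lyap :: "nat \<Rightarrow> nat \<Rightarrow> (nat \<Rightarrow> 'a \<Rightarrow> 'a::real_inner) \<Rightarrow> (nat set \<Rightarrow> real)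
    \<Rightarrow> (nat set \<Rightarrow> real) \<Rightarrow> real \<Rightarrow> 'a \<Rightarrow> nat set \<Rightarrow> 'a \<times> (nat \<Rightarrow> 'a) \<Rightarrow> real" where
  "saga_lyap n \<tau> gradf p L \<alpha> xs C xJ =
     (norm (fst xJ - xs))\<^sup>2
     + 2 * (real n / (4 * real \<tau> * L C)) * \<alpha>
         * (norm (Jmean n (snd xJ) - grad_est n gradf p C (snd xJ) xs))\<^sup>2"

text \<open>E[Psi_S^k]: expectation over the i.i.d. samples S_0..S_{k-1} (each with law
  Pr(S = C) = p C on G) and over an independent copy S of the sampling.  Since the
  sampling is supported on the finite set G, the expectation is the finite sum
  below.\<close>
definition saga_expected_lyap :: "nat \<Rightarrow> nat \<Rightarrow> (nat \<Rightarrow> 'a \<Rightarrow> 'a::real_inner) \<Rightarrow> nat set set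
    \<Rightarrow> (nat set \<Rightarrow> real) \<Rightarrow> (nat set \<Rightarrow> real) \<Rightarrow> real \<Rightarrow> 'a \<Rightarrow> (nat \<Rightarrow> 'a) \<Rightarrow> 'a
    \<Rightarrow> nat \<Rightarrow> real" where
  "saga_expected_lyap n \<tau> gradf G p L \<alpha> x0 J0 xs k =
     (\<Sum>s\<in>PiE {..<k} (\<lambda>_. G). (\<Prod>j<k. p (s j)) *
        (\<Sum>C\<in>G. p C * saga_lyap n \<tau> gradf p L \<alpha> xs C (saga_iter n gradf p \<alpha> x0 J0 s k)))"

end

theory Submission
  imports Defs
begin


lemma descent:
  fixes F :: "'a::real_inner \<Rightarrow> real"
  assumes d: "\<And>x. (F has_derivative (\<lambda>h. g x \<bullet> h)) (at x)"
    and lip: "\<And>x y. norm (g x - g y) \<le> L * norm (x - y)"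
  shows "F y \<le> F x + g x \<bullet> (y - x) + L / 2 * (norm (y - x))\<^sup>2"
proof -
  define v where "v = y - x"
  define \<phi> where "\<phi> t = F (x + t *\<^sub>R v) - t * (g x \<bullet> v) - L / 2 * t\<^sup>2 * (norm v)\<^sup>2" for t
  have D: "DERIV \<phi> t :> (g (x + t *\<^sub>R v) \<bullet> v - g x \<bullet> v - L * t * (norm v)\<^sup>2)" for t
  proof -
    have l: "((\<lambda>t. x + t *\<^sub>R v) has_derivative (\<lambda>dt. dt *\<^sub>R v)) (at t)"
      by (auto intro!: derivative_eq_intros)
    have c: "((\<lambda>t. F (x + t *\<^sub>R v)) has_derivative (\<lambda>dt. g (x + t *\<^sub>R v) \<bullet> (dt *\<^sub>R v))) (at t)"
      by (rule has_derivative_compose[OF l d])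
    have c2: "((\<lambda>t. F (x + t *\<^sub>R v)) has_field_derivative (g (x + t *\<^sub>R v) \<bullet> v)) (at t)"
      by (rule has_derivative_imp_has_field_derivative[OF c]) simp
    show ?thesis unfolding \<phi>_def
      by (auto intro!: derivative_eq_intros c2 simp: power2_eq_square algebra_simps)
  qed
  have "\<phi> 1 \<le> \<phi> 0"
  proof (rule DERIV_nonpos_imp_nonincreasing[of 0 1])
    fix t :: real assume t: "0 \<le> t" "t \<le> 1"
    have "(g (x + t *\<^sub>R v) - g x) \<bullet> v \<le> norm (g (x + t *\<^sub>R v) - g x) * norm v"
      by (rule norm_cauchy_schwarz)
    also have "\<dots> \<le> (L * norm (t *\<^sub>R v)) * norm v"
      using lip[of "x + t *\<^sub>R v" x] by (intro mult_right_mono) auto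
    also have "\<dots> = L * t * (norm v)\<^sup>2" using t by (simp add: power2_eq_square)
    finally show "\<exists>y. DERIV \<phi> t :> y \<and> y \<le> 0"
      using D[of t] by (intro exI[of _ "g (x + t *\<^sub>R v) \<bullet> v - g x \<bullet> v - L * t * (norm v)\<^sup>2"])
        (auto simp: inner_diff_left)
  qed simp
  then show ?thesis unfolding \<phi>_def v_def by simp
qed

lemma cocoercive:
  fixes F :: "'a::real_inner \<Rightarrow> real"
  assumes desc: "\<And>x y. F y \<le> F x + g x \<bullet> (y - x) + L / 2 * (norm (y - x))\<^sup>2"
    and conv: "\<And>x y. F x + g x \<bullet> (y - x) \<le> F y"
    and L: "L > 0"
  shows "(1 / L) * (norm (g y - g x))\<^sup>2 \<le> (g y - g x) \<bullet> (y - x)"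
proof -
  have key: "(1 / (2 * L)) * (norm (g b - g a))\<^sup>2 \<le> F b - F a - g a \<bullet> (b - a)" for a b
  proof -
    define w where "w = g b - g a"
    define z where "z = b - (1 / L) *\<^sub>R w"
    have 1: "F a + g a \<bullet> (z - a) \<le> F z" by (rule conv)
    have 2: "F z \<le> F b + g b \<bullet> (z - b) + L / 2 * (norm (z - b))\<^sup>2" by (rule desc)
    have e1: "g a \<bullet> (z - a) = g a \<bullet> (b - a) - (1 / L) * (g a \<bullet> w)"
      unfolding z_def by (simp add: inner_diff_right algebra_simps)
    have e2: "g b \<bullet> (z - b) = - (1 / L) * (g b \<bullet> w)"
      unfolding z_def by (simp add: inner_diff_right algebra_simps)
    have e3': "L / 2 * (norm (z - b))\<^sup>2 = (1 / (2 * L)) * (norm w)\<^sup>2"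
      unfolding z_def using L by (simp add: power_mult_distrib power2_eq_square field_simps)
    have e3: "L / 2 * (norm (z - b))\<^sup>2 = (1 / (2 * L)) * (w \<bullet> w)"
      using e3' by (simp add: power2_norm_eq_inner)
    have e4: "(g b \<bullet> w) - (g a \<bullet> w) = w \<bullet> w" unfolding w_def by (simp add: inner_diff_left)
    have "(1 / (2 * L)) * (w \<bullet> w) = (1 / L) * (w \<bullet> w) - (1 / (2 * L)) * (w \<bullet> w)"
      using L by (simp add: field_simps)
    have "(1 / (2 * L)) * (w \<bullet> w) \<le> F b - F a - g a \<bullet> (b - a)"
    proof -
      have e5: "(1 / L) * (g b \<bullet> w) - (1 / L) * (g a \<bullet> w) = (1 / L) * (w \<bullet> w)"
        using e4 by (simp flip: diff_divide_distrib)
      show ?thesis using 1 2 e1 e2 e3 e5 \<open>(1 / (2 * L)) * (w \<bullet> w) = _\<close> by linarith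
    qed
    then show ?thesis unfolding w_def by (simp add: power2_norm_eq_inner)
  qed
  have "(1 / (2 * L)) * (norm (g y - g x))\<^sup>2 \<le> F y - F x - g x \<bullet> (y - x)" by (rule key)
  moreover have "(1 / (2 * L)) * (norm (g x - g y))\<^sup>2 \<le> F x - F y - g y \<bullet> (x - y)" by (rule key)
  moreover have "norm (g x - g y) = norm (g y - g x)" by (rule norm_minus_commute)
  moreover have "g y \<bullet> (x - y) = - (g y \<bullet> (y - x))" by (simp add: inner_diff_right)
  ultimately have "2 * ((1 / (2 * L)) * (norm (g y - g x))\<^sup>2) \<le> (g y - g x) \<bullet> (y - x)"
    by (simp add: inner_diff_left)
  then show ?thesis using L by simp
qed

lemma real_ineq:
  fixes \<alpha> \<mu> \<tau> L n p e A D Bt :: real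
  assumes pos: "\<alpha> > 0" "\<mu> > 0" "\<tau> > 0" "L > 0" "n > 0" "p > 0"
    and nn: "e \<ge> 0" "A \<ge> 0" "D \<ge> 0"
    and hB: "\<tau> * \<mu> * e + A / (\<tau> * L) \<le> 2 * Bt"
    and ha: "\<alpha> * (\<mu> + 4 * L * \<tau> / n) \<le> p"
  shows "- (2 * \<alpha> / n) * Bt + 2 * \<alpha>\<^sup>2 * (A + D) / (n\<^sup>2 * p)
           + (\<alpha> / (2 * \<tau> * L * n * p)) * (p * A + (1 - p) * D)
         \<le> - \<mu> * \<alpha> * (\<tau> / n) * e + (1 - \<mu> * \<alpha>) * ((\<alpha> / (2 * \<tau> * L * n * p)) * D)"
proof -
  have ha': "\<alpha> * \<mu> * n + 4 * \<alpha> * L * \<tau> \<le> p * n"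
  proof -
    have "(\<alpha> * (\<mu> + 4 * L * \<tau> / n)) * n \<le> p * n" using ha pos by (intro mult_right_mono) auto
    moreover have "(\<alpha> * (\<mu> + 4 * L * \<tau> / n)) * n = \<alpha> * \<mu> * n + 4 * \<alpha> * L * \<tau>"
      using pos by (simp add: field_simps)
    ultimately show ?thesis by linarith
  qed
  have i: "(\<alpha> / (2 * \<tau> * L * n * p)) * (1 - \<mu> * \<alpha>) * D - (2 * \<alpha>\<^sup>2 * D / (n\<^sup>2 * p) + (\<alpha> / (2 * \<tau> * L * n * p)) * ((1 - p) * D))
      = (\<alpha> * D / (2 * \<tau> * L * n\<^sup>2 * p)) * (n * p - \<alpha> * \<mu> * n - 4 * \<alpha> * L * \<tau>)"
    using pos by (simp add: field_simps power2_eq_square)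
  have i2: "(\<alpha> * D / (2 * \<tau> * L * n\<^sup>2 * p)) * (n * p - \<alpha> * \<mu> * n - 4 * \<alpha> * L * \<tau>) \<ge> 0"
  proof -
    have "0 \<le> n * p - \<alpha> * \<mu> * n - 4 * \<alpha> * L * \<tau>" using ha' by (simp add: mult.commute)
    then show ?thesis using pos nn by (intro mult_nonneg_nonneg) auto
  qed
  have j: "(\<alpha> / n) * (A / (\<tau> * L)) - (2 * \<alpha>\<^sup>2 * A / (n\<^sup>2 * p) + (\<alpha> / (2 * \<tau> * L * n * p)) * (p * A))
      = (\<alpha> * A / (2 * \<tau> * L * n\<^sup>2 * p)) * (n * p - 4 * \<alpha> * L * \<tau>)"
    using pos by (simp add: field_simps power2_eq_square)
  have j2: "(\<alpha> * A / (2 * \<tau> * L * n\<^sup>2 * p)) * (n * p - 4 * \<alpha> * L * \<tau>) \<ge> 0"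
  proof -
    have "\<alpha> * \<mu> * n \<ge> 0" using pos by simp
    then have "0 \<le> n * p - 4 * \<alpha> * L * \<tau>" using ha' by (simp add: mult.commute)
    then show ?thesis using pos nn by (intro mult_nonneg_nonneg) auto
  qed
  have k: "(2 * \<alpha> / n) * Bt \<ge> (\<alpha> / n) * (\<tau> * \<mu> * e + A / (\<tau> * L))"
  proof -
    have "(\<alpha> / n) * (\<tau> * \<mu> * e + A / (\<tau> * L)) \<le> (\<alpha> / n) * (2 * Bt)"
      using hB pos by (intro mult_left_mono) auto
    also have "(\<alpha> / n) * (2 * Bt) = (2 * \<alpha> / n) * Bt" by simp
    finally show ?thesis .
  qed
  have l: "(\<alpha> / n) * (\<tau> * \<mu> * e + A / (\<tau> * L)) = \<mu> * \<alpha> * (\<tau> / n) * e + (\<alpha> / n) * (A / (\<tau> * L))"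
    using pos by (simp add: field_simps)
  have s: "2 * \<alpha>\<^sup>2 * (A + D) / (n\<^sup>2 * p) = 2 * \<alpha>\<^sup>2 * A / (n\<^sup>2 * p) + 2 * \<alpha>\<^sup>2 * D / (n\<^sup>2 * p)"
    by (simp add: add_divide_distrib distrib_left)
  have t: "(\<alpha> / (2 * \<tau> * L * n * p)) * (p * A + (1 - p) * D) = (\<alpha> / (2 * \<tau> * L * n * p)) * (p * A) + (\<alpha> / (2 * \<tau> * L * n * p)) * ((1 - p) * D)"
    by (simp add: distrib_left)
  show ?thesis using i i2 j j2 k l s t by (simp add: algebra_simps)
qed



locale saga =
  fixes n \<tau> :: nat
    and f :: "nat \<Rightarrow> 'a::euclidean_space \<Rightarrow> real"
    and gradf :: "nat \<Rightarrow> 'a \<Rightarrow> 'a"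
    and xs :: 'a
    and G :: "nat set set"
    and p L :: "nat set \<Rightarrow> real"
    and \<mu> \<alpha> :: real
  assumes n_pos: "n > 0"
    and grad: "\<And>i x. i < n \<Longrightarrow> (f i has_derivative (\<lambda>h. gradf i x \<bullet> h)) (at x)"
    and minimizer: "\<And>x. (1 / real n) * (\<Sum>i<n. f i xs) \<le> (1 / real n) * (\<Sum>i<n. f i x)"
    and partition: "partition_on {..<n} G"
    and block_size: "\<And>C. C \<in> G \<Longrightarrow> card C = \<tau>"
    and p_pos: "\<And>C. C \<in> G \<Longrightarrow> p C > 0"
    and p_sum: "(\<Sum>C\<in>G. p C) = 1"
    and mu_pos: "\<mu> > 0"
    and smooth: "\<And>C. C \<in> G \<Longrightarrow> smooth_with_grad (gradC gradf C) (L C)"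
    and strconv: "\<And>C. C \<in> G \<Longrightarrow> strongly_convex_with_grad (fC f C) (gradC gradf C) \<mu>"
    and alpha_pos: "\<alpha> > 0"
    and alpha_le: "\<alpha> \<le> Min ((\<lambda>C. p C / (\<mu> + 4 * L C * real \<tau> / real n)) ` G)"
begin

lemma Union_G: "\<Union>G = {..<n}" using partition by (auto simp: partition_on_def)
lemma sub: "C \<in> G \<Longrightarrow> C \<subseteq> {..<n}" using Union_G by auto
lemma finG: "finite G"
  by (rule finite_subset[of _ "Pow {..<n}"]) (use sub in auto)
lemma finC: "C \<in> G \<Longrightarrow> finite C" using sub finite_subset by blast
lemma disj: "C \<in> G \<Longrightarrow> D \<in> G \<Longrightarrow> C \<noteq> D \<Longrightarrow> C \<inter> D = {}"
  using partition by (auto simp: partition_on_def disjoint_def)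
lemma G_ne: "G \<noteq> {}" using Union_G n_pos by auto
lemma tau_pos: "\<tau> > 0"
proof -
  obtain C where C: "C \<in> G" using G_ne by auto
  have "C \<noteq> {}" using partition C by (auto simp: partition_on_def)
  then show ?thesis using block_size[OF C] finC[OF C] by (metis card_gt_0_iff)
qed
lemma sum_part: "(\<Sum>C\<in>G. \<Sum>i\<in>C. h i) = (\<Sum>i<n. h i)"
proof -
  have "(\<Sum>i\<in>\<Union>G. h i) = (\<Sum>C\<in>G. \<Sum>i\<in>C. h i)"
    using sum.Union_disjoint[of G h] finC disj by auto
  then show ?thesis using Union_G by simp
qed
lemma cardG: "real (card G) * real \<tau> = real n"
proof -
  have "card (\<Union>G) = sum card G"
    by (rule card_Union_disjoint) (use partition finC in \<open>auto simp: partition_on_def\<close>)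
  then have "n = card G * \<tau>" using Union_G block_size by simp
  then show ?thesis by simp
qed

lemma grad_opt: "(\<Sum>i<n. gradf i xs) = 0"
proof -
  let ?F = "\<lambda>x. (1 / real n) * (\<Sum>i<n. f i x)"
  have d: "(?F has_derivative (\<lambda>h. (1 / real n) * (\<Sum>i<n. gradf i xs \<bullet> h))) (at xs)"
    by (intro has_derivative_mult_right has_derivative_sum grad) auto
  have "(\<lambda>h. (1 / real n) * (\<Sum>i<n. gradf i xs \<bullet> h)) = (\<lambda>v. 0)"
    by (rule differential_zero_maxmin[OF _ _ d, of UNIV]) (use minimizer in auto)
  then have "(1 / real n) * (\<Sum>i<n. gradf i xs \<bullet> (\<Sum>i<n. gradf i xs)) = 0"
    by metis
  then have "(\<Sum>i<n. gradf i xs) \<bullet> (\<Sum>i<n. gradf i xs) = 0"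
    using n_pos by (simp add: inner_sum_left)
  then show ?thesis by simp
qed

lemma fC_deriv: "C \<in> G \<Longrightarrow> (fC f C has_derivative (\<lambda>h. gradC gradf C x \<bullet> h)) (at x)"
proof -
  assume C: "C \<in> G"
  have d: "((\<lambda>x. (1 / real (card C)) * (\<Sum>i\<in>C. f i x)) has_derivative
      (\<lambda>h. (1 / real (card C)) * (\<Sum>i\<in>C. gradf i x \<bullet> h))) (at x)"
    by (intro has_derivative_mult_right has_derivative_sum grad) (use sub[OF C] in auto)
  have e: "(\<lambda>h. (1 / real (card C)) * (\<Sum>i\<in>C. gradf i x \<bullet> h)) = (\<lambda>h. gradC gradf C x \<bullet> h)"
    by (auto simp: gradC_def inner_sum_left)
  show ?thesis using d unfolding e fC_def[abs_def] by simp
qed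

lemma strong_mono: "C \<in> G \<Longrightarrow> \<mu> * (norm (x - y))\<^sup>2 \<le> (gradC gradf C x - gradC gradf C y) \<bullet> (x - y)"
proof -
  assume C: "C \<in> G"
  have 1: "fC f C y \<ge> fC f C x + gradC gradf C x \<bullet> (y - x) + \<mu> / 2 * (norm (y - x))\<^sup>2"
    using strconv[OF C] by (auto simp: strongly_convex_with_grad_def)
  have 2: "fC f C x \<ge> fC f C y + gradC gradf C y \<bullet> (x - y) + \<mu> / 2 * (norm (x - y))\<^sup>2"
    using strconv[OF C] by (auto simp: strongly_convex_with_grad_def)
  have 3: "norm (y - x) = norm (x - y)" by (rule norm_minus_commute)
  have 4: "gradC gradf C x \<bullet> (y - x) = - (gradC gradf C x \<bullet> (x - y))" by (simp add: inner_diff_right)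
  show ?thesis using 1 2 3 4 by (simp add: inner_diff_left)
qed

lemma L_ge: "C \<in> G \<Longrightarrow> \<mu> \<le> L C"
proof -
  assume C: "C \<in> G"
  obtain b :: 'a where b: "b \<in> Basis" using nonempty_Basis by blast
  have nb: "norm (b - 0) = 1" using b by simp
  have sm: "\<mu> * (norm (b - 0))\<^sup>2 \<le> (gradC gradf C b - gradC gradf C 0) \<bullet> (b - 0)"
    by (rule strong_mono[OF C])
  have cs: "(gradC gradf C b - gradC gradf C 0) \<bullet> (b - 0) \<le> norm (gradC gradf C b - gradC gradf C 0) * norm (b - 0)"
    by (rule norm_cauchy_schwarz)
  have lip: "norm (gradC gradf C b - gradC gradf C 0) \<le> L C * norm (b - 0)"
    using smooth[OF C] unfolding smooth_with_grad_def by blast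
  show ?thesis using sm cs lip unfolding nb by simp
qed

lemma L_pos: "C \<in> G \<Longrightarrow> L C > 0" using L_ge mu_pos by force

lemma cocoC: "C \<in> G \<Longrightarrow> (1 / L C) * (norm (gradC gradf C y - gradC gradf C x))\<^sup>2
   \<le> (gradC gradf C y - gradC gradf C x) \<bullet> (y - x)"
proof -
  assume C: "C \<in> G"
  have lip: "\<And>a b. norm (gradC gradf C a - gradC gradf C b) \<le> L C * norm (a - b)"
    using smooth[OF C] unfolding smooth_with_grad_def by blast
  have d: "\<And>a b. fC f C b \<le> fC f C a + gradC gradf C a \<bullet> (b - a) + L C / 2 * (norm (b - a))\<^sup>2"
    using descent[OF fC_deriv[OF C] lip] .
  have c: "\<And>a b. fC f C a + gradC gradf C a \<bullet> (b - a) \<le> fC f C b"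
  proof -
    fix a b
    have "fC f C b \<ge> fC f C a + gradC gradf C a \<bullet> (b - a) + \<mu> / 2 * (norm (b - a))\<^sup>2"
      using strconv[OF C] unfolding strongly_convex_with_grad_def by blast
    moreover have "\<mu> / 2 * (norm (b - a))\<^sup>2 \<ge> 0" using mu_pos by simp
    ultimately show "fC f C a + gradC gradf C a \<bullet> (b - a) \<le> fC f C b" by linarith
  qed
  show ?thesis using cocoercive[OF d c L_pos[OF C]] .
qed

lemma block_ineq:
  assumes C: "C \<in> G"
  shows "real \<tau> * \<mu> * (norm (x - xs))\<^sup>2
     + (norm (\<Sum>i\<in>C. gradf i x - gradf i xs))\<^sup>2 / (real \<tau> * L C)
     \<le> 2 * ((\<Sum>i\<in>C. gradf i x - gradf i xs) \<bullet> (x - xs))"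
proof -
  let ?g = "gradC gradf C"
  define d where "d = ?g x - ?g xs"
  have tp: "real \<tau> > 0" using tau_pos by simp
  have s: "(\<Sum>i\<in>C. gradf i z) = real \<tau> *\<^sub>R ?g z" for z
    using tp block_size[OF C] by (simp add: gradC_def)
  have a: "(\<Sum>i\<in>C. gradf i x - gradf i xs) = real \<tau> *\<^sub>R d"
    unfolding d_def by (simp add: sum_subtractf s scaleR_diff_right)
  have co: "(1 / L C) * (norm d)\<^sup>2 \<le> d \<bullet> (x - xs)" unfolding d_def by (rule cocoC[OF C])
  have sm: "\<mu> * (norm (x - xs))\<^sup>2 \<le> d \<bullet> (x - xs)" unfolding d_def by (rule strong_mono[OF C])
  have Lp: "L C > 0" by (rule L_pos[OF C])
  have "real \<tau> * \<mu> * (norm (x - xs))\<^sup>2 + (real \<tau> * norm d)\<^sup>2 / (real \<tau> * L C)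
      = real \<tau> * (\<mu> * (norm (x - xs))\<^sup>2 + (1 / L C) * (norm d)\<^sup>2)"
    using tp Lp by (simp add: power2_eq_square field_simps)
  also have "\<dots> \<le> real \<tau> * (2 * (d \<bullet> (x - xs)))"
    using co sm tp by (intro mult_left_mono) auto
  finally show ?thesis unfolding a using tp by simp
qed

end

context saga begin

lemma alpha_le': "C \<in> G \<Longrightarrow> \<alpha> * (\<mu> + 4 * L C * real \<tau> / real n) \<le> p C"
proof -
  assume C: "C \<in> G"
  have den: "\<mu> + 4 * L C * real \<tau> / real n > 0"
    using mu_pos L_pos[OF C] by (simp add: add_pos_nonneg)
  have "\<alpha> \<le> p C / (\<mu> + 4 * L C * real \<tau> / real n)"
  proof -
    have "Min ((\<lambda>C. p C / (\<mu> + 4 * L C * real \<tau> / real n)) ` G) \<le> p C / (\<mu> + 4 * L C * real \<tau> / real n)"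
      by (rule Min_le) (use finG C in auto)
    then show ?thesis using alpha_le by linarith
  qed
  then show ?thesis using den by (simp add: pos_le_divide_eq)
qed

lemma lyap_eq:
  assumes C: "C \<in> G"
  shows "p C * saga_lyap n \<tau> gradf p L \<alpha> xs C (x, J)
    = p C * (norm (x - xs))\<^sup>2 + (\<alpha> / (2 * real \<tau> * L C * real n * p C)) * (norm (\<Sum>i\<in>C. J i - gradf i xs))\<^sup>2"
proof -
  have pp: "p C > 0" by (rule p_pos[OF C])
  have Lp: "L C > 0" by (rule L_pos[OF C])
  have np: "real n > 0" using n_pos by simp
  have tp: "real \<tau> > 0" using tau_pos by simp
  have "Jmean n J - grad_est n gradf p C J xs = - ((1 / (real n * p C)) *\<^sub>R (\<Sum>i\<in>C. gradf i xs - J i))"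
    unfolding grad_est_def by simp
  also have "(\<Sum>i\<in>C. gradf i xs - J i) = - (\<Sum>i\<in>C. J i - gradf i xs)"
    by (simp add: sum_subtractf)
  finally have eq: "Jmean n J - grad_est n gradf p C J xs = (1 / (real n * p C)) *\<^sub>R (\<Sum>i\<in>C. J i - gradf i xs)"
    by simp
  have nrm: "(norm (Jmean n J - grad_est n gradf p C J xs))\<^sup>2 = (1 / (real n * p C))\<^sup>2 * (norm (\<Sum>i\<in>C. J i - gradf i xs))\<^sup>2"
    unfolding eq using pp np by (simp add: power_divide)
  show ?thesis
    unfolding saga_lyap_def fst_conv snd_conv nrm
    using pp Lp np tp by (simp add: field_simps power2_eq_square)
qed

lemma Phi_eq:
  "(\<Sum>C\<in>G. p C * saga_lyap n \<tau> gradf p L \<alpha> xs C (x, J))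
    = (norm (x - xs))\<^sup>2 + (\<Sum>C\<in>G. (\<alpha> / (2 * real \<tau> * L C * real n * p C)) * (norm (\<Sum>i\<in>C. J i - gradf i xs))\<^sup>2)"
proof -
  have "(\<Sum>C\<in>G. p C * saga_lyap n \<tau> gradf p L \<alpha> xs C (x, J))
     = (\<Sum>C\<in>G. p C * (norm (x - xs))\<^sup>2 + (\<alpha> / (2 * real \<tau> * L C * real n * p C)) * (norm (\<Sum>i\<in>C. J i - gradf i xs))\<^sup>2)"
    by (rule sum.cong) (auto simp: lyap_eq)
  also have "\<dots> = (\<Sum>C\<in>G. p C) * (norm (x - xs))\<^sup>2 + (\<Sum>C\<in>G. (\<alpha> / (2 * real \<tau> * L C * real n * p C)) * (norm (\<Sum>i\<in>C. J i - gradf i xs))\<^sup>2)"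
    by (simp add: sum.distrib sum_distrib_right)
  finally show ?thesis using p_sum by simp
qed


lemma norm_add_sq_le: "(norm (u + v))\<^sup>2 \<le> 2 * (norm u)\<^sup>2 + 2 * (norm (v::'a))\<^sup>2"
proof -
  have "(norm (u + v))\<^sup>2 + (norm (u - v))\<^sup>2 = 2 * (norm u)\<^sup>2 + 2 * (norm v)\<^sup>2"
    by (simp add: power2_norm_eq_inner inner_add_left inner_add_right inner_diff_left inner_diff_right inner_commute)
  then show ?thesis by (smt (verit) zero_le_power2)
qed

lemma F6:
  assumes C: "C \<in> G"
  shows "(\<Sum>C'\<in>G. p C' * (norm (\<Sum>i\<in>C. (\<lambda>i. if i \<in> C' then gradf i x else J i) i - gradf i xs))\<^sup>2)
     = p C * (norm (\<Sum>i\<in>C. gradf i x - gradf i xs))\<^sup>2 + (1 - p C) * (norm (\<Sum>i\<in>C. J i - gradf i xs))\<^sup>2"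
proof -
  have a: "(\<Sum>i\<in>C. (\<lambda>i. if i \<in> C then gradf i x else J i) i - gradf i xs) = (\<Sum>i\<in>C. gradf i x - gradf i xs)"
    by (rule sum.cong) auto
  have b: "(\<Sum>i\<in>C. (\<lambda>i. if i \<in> C' then gradf i x else J i) i - gradf i xs) = (\<Sum>i\<in>C. J i - gradf i xs)"
    if "C' \<in> G - {C}" for C'
  proof (rule sum.cong)
    fix i assume "i \<in> C"
    then have "i \<notin> C'" using disj[OF C, of C'] that by auto
    then show "(\<lambda>i. if i \<in> C' then gradf i x else J i) i - gradf i xs = J i - gradf i xs" by simp
  qed simp
  have "(\<Sum>C'\<in>G. p C' * (norm (\<Sum>i\<in>C. (\<lambda>i. if i \<in> C' then gradf i x else J i) i - gradf i xs))\<^sup>2)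
     = p C * (norm (\<Sum>i\<in>C. gradf i x - gradf i xs))\<^sup>2
       + (\<Sum>C'\<in>G - {C}. p C' * (norm (\<Sum>i\<in>C. (\<lambda>i. if i \<in> C' then gradf i x else J i) i - gradf i xs))\<^sup>2)"
    by (subst sum.remove[OF finG C]) (use a in simp)
  also have "(\<Sum>C'\<in>G - {C}. p C' * (norm (\<Sum>i\<in>C. (\<lambda>i. if i \<in> C' then gradf i x else J i) i - gradf i xs))\<^sup>2)
      = (\<Sum>C'\<in>G - {C}. p C') * (norm (\<Sum>i\<in>C. J i - gradf i xs))\<^sup>2"
    by (simp add: b sum_distrib_right)
  also have "(\<Sum>C'\<in>G - {C}. p C') = 1 - p C"
    using sum.remove[OF finG C, of p] p_sum by simp
  finally show ?thesis .
qed

lemma one_step: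
  "(\<Sum>C'\<in>G. p C' * (\<Sum>C\<in>G. p C * saga_lyap n \<tau> gradf p L \<alpha> xs C (saga_step n gradf p \<alpha> (x, J) C')))
    \<le> (1 - \<mu> * \<alpha>) * (\<Sum>C\<in>G. p C * saga_lyap n \<tau> gradf p L \<alpha> xs C (x, J))"
proof -
  define e where "e = (norm (x - xs))\<^sup>2"
  define a where "a C = (\<Sum>i\<in>C. gradf i x - gradf i xs)" for C
  define d where "d C = (\<Sum>i\<in>C. J i - gradf i xs)" for C
  define m where "m = Jmean n J"
  define gh where "gh C = grad_est n gradf p C J x" for C
  define W where "W C = \<alpha> / (2 * real \<tau> * L C * real n * p C)" for C
  define J' where "J' C' = (\<lambda>i. if i \<in> C' then gradf i x else J i)" for C'
  have np: "real n > 0" using n_pos by simp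
  have step: "saga_step n gradf p \<alpha> (x, J) C' = (x - \<alpha> *\<^sub>R gh C', J' C')" for C'
    by (simp add: saga_step_def gh_def J'_def)
  have F1: "gh C = (1 / (real n * p C)) *\<^sub>R a C + (m - (1 / (real n * p C)) *\<^sub>R d C)" for C
  proof -
    have "(\<Sum>i\<in>C. gradf i x - J i) = a C - d C"
      unfolding a_def d_def by (simp add: sum_subtractf)
    then show ?thesis unfolding gh_def grad_est_def m_def by (simp add: scaleR_diff_right)
  qed
  have sd: "(\<Sum>C\<in>G. d C) = (\<Sum>i<n. J i)"
    unfolding d_def using sum_part[of "\<lambda>i. J i - gradf i xs"] grad_opt by (simp add: sum_subtractf)
  have sa: "(\<Sum>C\<in>G. a C) = (\<Sum>i<n. gradf i x)"
    unfolding a_def using sum_part[of "\<lambda>i. gradf i x - gradf i xs"] grad_opt by (simp add: sum_subtractf)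
  have F2: "m = (\<Sum>C\<in>G. p C *\<^sub>R ((1 / (real n * p C)) *\<^sub>R d C))"
  proof -
    have "(\<Sum>C\<in>G. p C *\<^sub>R ((1 / (real n * p C)) *\<^sub>R d C)) = (\<Sum>C\<in>G. (1 / real n) *\<^sub>R d C)"
    proof (rule sum.cong)
      fix C assume "C \<in> G"
      then show "p C *\<^sub>R ((1 / (real n * p C)) *\<^sub>R d C) = (1 / real n) *\<^sub>R d C"
        using p_pos[of C] by simp
    qed simp
    also have "\<dots> = m" unfolding m_def Jmean_def sd[symmetric] by (simp add: scaleR_sum_right)
    finally show ?thesis by simp
  qed
  have F3: "(\<Sum>C\<in>G. p C *\<^sub>R gh C) = (1 / real n) *\<^sub>R (\<Sum>C\<in>G. a C)"
  proof -
    have "(\<Sum>C\<in>G. p C *\<^sub>R gh C) = (\<Sum>C\<in>G. (1 / real n) *\<^sub>R a C + (p C *\<^sub>R m - p C *\<^sub>R ((1 / (real n * p C)) *\<^sub>R d C)))"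
    proof (rule sum.cong)
      fix C assume C: "C \<in> G"
      show "p C *\<^sub>R gh C = (1 / real n) *\<^sub>R a C + (p C *\<^sub>R m - p C *\<^sub>R ((1 / (real n * p C)) *\<^sub>R d C))"
        unfolding F1 using p_pos[OF C] by (simp add: scaleR_add_right scaleR_diff_right)
    qed simp
    also have "\<dots> = (\<Sum>C\<in>G. (1 / real n) *\<^sub>R a C) + ((\<Sum>C\<in>G. p C *\<^sub>R m) - (\<Sum>C\<in>G. p C *\<^sub>R ((1 / (real n * p C)) *\<^sub>R d C)))"
      by (simp only: sum.distrib sum_subtractf)
    also have "(\<Sum>C\<in>G. p C *\<^sub>R ((1 / (real n * p C)) *\<^sub>R d C)) = m" by (rule F2[symmetric])
    also have "(\<Sum>C\<in>G. p C *\<^sub>R m) = m" using p_sum by (simp add: scaleR_sum_left[symmetric])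
    finally show ?thesis by (simp add: scaleR_sum_right)
  qed
  have F4: "(\<Sum>C\<in>G. p C * (norm (gh C))\<^sup>2)
      \<le> (\<Sum>C\<in>G. 2 * ((norm (a C))\<^sup>2 + (norm (d C))\<^sup>2) / ((real n)\<^sup>2 * p C))"
  proof -
    define z where "z C = (1 / (real n * p C)) *\<^sub>R d C" for C
    have pz: "p C * (norm (z C))\<^sup>2 = (norm (d C))\<^sup>2 / ((real n)\<^sup>2 * p C)" if "C \<in> G" for C
      using p_pos[OF that] np unfolding z_def by (simp add: power2_eq_square field_simps)
    have pu: "p C * (norm ((1 / (real n * p C)) *\<^sub>R a C))\<^sup>2 = (norm (a C))\<^sup>2 / ((real n)\<^sup>2 * p C)" if "C \<in> G" for C
      using p_pos[OF that] np by (simp add: power2_eq_square field_simps)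
    have var: "(\<Sum>C\<in>G. p C * (norm (m - z C))\<^sup>2) = (\<Sum>C\<in>G. p C * (norm (z C))\<^sup>2) - (norm m)\<^sup>2"
    proof -
      have "(\<Sum>C\<in>G. p C * (norm (m - z C))\<^sup>2)
          = (\<Sum>C\<in>G. p C * (norm m)\<^sup>2 - 2 * (m \<bullet> (p C *\<^sub>R z C)) + p C * (norm (z C))\<^sup>2)"
        by (rule sum.cong) (auto simp: power2_norm_eq_inner inner_diff_left inner_diff_right inner_commute algebra_simps)
      also have "\<dots> = (\<Sum>C\<in>G. p C) * (norm m)\<^sup>2 - 2 * (m \<bullet> (\<Sum>C\<in>G. p C *\<^sub>R z C)) + (\<Sum>C\<in>G. p C * (norm (z C))\<^sup>2)"
        by (simp add: sum.distrib sum_subtractf sum_distrib_right sum_distrib_left inner_sum_right)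
      also have "(\<Sum>C\<in>G. p C *\<^sub>R z C) = m" using F2 unfolding z_def by simp
      finally show ?thesis using p_sum by (simp add: power2_norm_eq_inner)
    qed
    have "(\<Sum>C\<in>G. p C * (norm (gh C))\<^sup>2)
        \<le> (\<Sum>C\<in>G. p C * (2 * (norm ((1 / (real n * p C)) *\<^sub>R a C))\<^sup>2 + 2 * (norm (m - z C))\<^sup>2))"
    proof (rule sum_mono)
      fix C assume C: "C \<in> G"
      show "p C * (norm (gh C))\<^sup>2 \<le> p C * (2 * (norm ((1 / (real n * p C)) *\<^sub>R a C))\<^sup>2 + 2 * (norm (m - z C))\<^sup>2)"
        unfolding F1 z_def using p_pos[OF C] by (intro mult_left_mono norm_add_sq_le) auto
    qed
    also have "\<dots> = 2 * (\<Sum>C\<in>G. (norm (a C))\<^sup>2 / ((real n)\<^sup>2 * p C)) + 2 * (\<Sum>C\<in>G. p C * (norm (m - z C))\<^sup>2)"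
    proof -
      have "(\<Sum>C\<in>G. p C * (2 * (norm ((1 / (real n * p C)) *\<^sub>R a C))\<^sup>2 + 2 * (norm (m - z C))\<^sup>2))
          = (\<Sum>C\<in>G. 2 * (p C * (norm ((1 / (real n * p C)) *\<^sub>R a C))\<^sup>2) + 2 * (p C * (norm (m - z C))\<^sup>2))"
        by (simp add: algebra_simps)
      also have "\<dots> = (\<Sum>C\<in>G. 2 * ((norm (a C))\<^sup>2 / ((real n)\<^sup>2 * p C)) + 2 * (p C * (norm (m - z C))\<^sup>2))"
      proof (rule sum.cong)
        fix C assume "C \<in> G"
        then show "2 * (p C * (norm ((1 / (real n * p C)) *\<^sub>R a C))\<^sup>2) + 2 * (p C * (norm (m - z C))\<^sup>2)
           = 2 * ((norm (a C))\<^sup>2 / ((real n)\<^sup>2 * p C)) + 2 * (p C * (norm (m - z C))\<^sup>2)"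
          by (simp only: pu)
      qed simp
      finally show ?thesis by (simp add: sum.distrib sum_distrib_left)
    qed
    also have "\<dots> \<le> 2 * (\<Sum>C\<in>G. (norm (a C))\<^sup>2 / ((real n)\<^sup>2 * p C)) + 2 * (\<Sum>C\<in>G. (norm (d C))\<^sup>2 / ((real n)\<^sup>2 * p C))"
    proof -
      have "(\<Sum>C\<in>G. p C * (norm (m - z C))\<^sup>2) \<le> (\<Sum>C\<in>G. p C * (norm (z C))\<^sup>2)" using var by simp
      also have "\<dots> = (\<Sum>C\<in>G. (norm (d C))\<^sup>2 / ((real n)\<^sup>2 * p C))" by (rule sum.cong) (auto simp: pz)
      finally show ?thesis by simp
    qed
    also have "\<dots> = (\<Sum>C\<in>G. 2 * ((norm (a C))\<^sup>2 + (norm (d C))\<^sup>2) / ((real n)\<^sup>2 * p C))"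
      by (simp add: sum_distrib_left sum.distrib add_divide_distrib distrib_left)
    finally show ?thesis .
  qed
  have F5: "(norm (x - \<alpha> *\<^sub>R gh C - xs))\<^sup>2 = e - 2 * \<alpha> * (gh C \<bullet> (x - xs)) + \<alpha>\<^sup>2 * (norm (gh C))\<^sup>2" for C
  proof -
    have eq: "x - \<alpha> *\<^sub>R gh C - xs = (x - xs) - \<alpha> *\<^sub>R gh C" by simp
    have g: "(norm (u - c *\<^sub>R v))\<^sup>2 = u \<bullet> u - 2 * c * (v \<bullet> u) + c\<^sup>2 * (v \<bullet> v)" for u v :: 'a and c :: real
      unfolding power2_norm_eq_inner by (simp add: inner_diff_left inner_diff_right inner_commute power2_eq_square algebra_simps)
    show ?thesis unfolding eq g e_def by (simp add: power2_norm_eq_inner inner_commute)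
  qed
  have LHS: "(\<Sum>C'\<in>G. p C' * (\<Sum>C\<in>G. p C * saga_lyap n \<tau> gradf p L \<alpha> xs C (saga_step n gradf p \<alpha> (x, J) C')))
      = (\<Sum>C'\<in>G. p C' * (norm (x - \<alpha> *\<^sub>R gh C' - xs))\<^sup>2)
        + (\<Sum>C\<in>G. W C * (\<Sum>C'\<in>G. p C' * (norm (\<Sum>i\<in>C. J' C' i - gradf i xs))\<^sup>2))"
  proof -
    have "(\<Sum>C'\<in>G. p C' * (\<Sum>C\<in>G. p C * saga_lyap n \<tau> gradf p L \<alpha> xs C (saga_step n gradf p \<alpha> (x, J) C')))
       = (\<Sum>C'\<in>G. p C' * (norm (x - \<alpha> *\<^sub>R gh C' - xs))\<^sup>2 + (\<Sum>C\<in>G. p C' * (W C * (norm (\<Sum>i\<in>C. J' C' i - gradf i xs))\<^sup>2)))"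
      unfolding step Phi_eq W_def by (simp add: distrib_left sum_distrib_left)
    also have "\<dots> = (\<Sum>C'\<in>G. p C' * (norm (x - \<alpha> *\<^sub>R gh C' - xs))\<^sup>2)
        + (\<Sum>C'\<in>G. \<Sum>C\<in>G. p C' * (W C * (norm (\<Sum>i\<in>C. J' C' i - gradf i xs))\<^sup>2))"
      by (simp only: sum.distrib)
    also have "(\<Sum>C'\<in>G. \<Sum>C\<in>G. p C' * (W C * (norm (\<Sum>i\<in>C. J' C' i - gradf i xs))\<^sup>2))
        = (\<Sum>C\<in>G. \<Sum>C'\<in>G. p C' * (W C * (norm (\<Sum>i\<in>C. J' C' i - gradf i xs))\<^sup>2))"
      by (rule sum.swap)
    also have "(\<Sum>C\<in>G. \<Sum>C'\<in>G. p C' * (W C * (norm (\<Sum>i\<in>C. J' C' i - gradf i xs))\<^sup>2))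
        = (\<Sum>C\<in>G. W C * (\<Sum>C'\<in>G. p C' * (norm (\<Sum>i\<in>C. J' C' i - gradf i xs))\<^sup>2))"
      unfolding sum_distrib_left by (simp add: mult.left_commute)
    finally show ?thesis .
  qed
  have P1: "(\<Sum>C'\<in>G. p C' * (norm (x - \<alpha> *\<^sub>R gh C' - xs))\<^sup>2)
      = e - 2 * \<alpha> * ((\<Sum>C\<in>G. p C *\<^sub>R gh C) \<bullet> (x - xs)) + \<alpha>\<^sup>2 * (\<Sum>C\<in>G. p C * (norm (gh C))\<^sup>2)"
  proof -
    have "(\<Sum>C'\<in>G. p C' * (norm (x - \<alpha> *\<^sub>R gh C' - xs))\<^sup>2)
      = (\<Sum>C\<in>G. p C * e - 2 * \<alpha> * ((p C *\<^sub>R gh C) \<bullet> (x - xs)) + \<alpha>\<^sup>2 * (p C * (norm (gh C))\<^sup>2))"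
      unfolding F5 by (rule sum.cong) (auto simp: algebra_simps)
    also have "\<dots> = (\<Sum>C\<in>G. p C) * e - 2 * \<alpha> * ((\<Sum>C\<in>G. p C *\<^sub>R gh C) \<bullet> (x - xs)) + \<alpha>\<^sup>2 * (\<Sum>C\<in>G. p C * (norm (gh C))\<^sup>2)"
      by (simp add: sum.distrib sum_subtractf sum_distrib_left sum_distrib_right inner_sum_left)
    finally show ?thesis using p_sum by simp
  qed
  have P2: "(\<Sum>C\<in>G. p C *\<^sub>R gh C) \<bullet> (x - xs) = (\<Sum>C\<in>G. (1 / real n) * (a C \<bullet> (x - xs)))"
    unfolding F3 by (simp add: inner_sum_left sum_distrib_left)
  have P3: "(\<Sum>C\<in>G. W C * (\<Sum>C'\<in>G. p C' * (norm (\<Sum>i\<in>C. J' C' i - gradf i xs))\<^sup>2))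
      = (\<Sum>C\<in>G. W C * (p C * (norm (a C))\<^sup>2 + (1 - p C) * (norm (d C))\<^sup>2))"
    by (rule sum.cong) (auto simp: F6 J'_def a_def d_def)
  define lhsC where "lhsC C = - (2 * \<alpha> / real n) * (a C \<bullet> (x - xs)) + 2 * \<alpha>\<^sup>2 * ((norm (a C))\<^sup>2 + (norm (d C))\<^sup>2) / ((real n)\<^sup>2 * p C)
           + W C * (p C * (norm (a C))\<^sup>2 + (1 - p C) * (norm (d C))\<^sup>2)" for C
  define rhsC where "rhsC C = - \<mu> * \<alpha> * (real \<tau> / real n) * e + (1 - \<mu> * \<alpha>) * (W C * (norm (d C))\<^sup>2)" for C
  have per: "lhsC C \<le> rhsC C" if C: "C \<in> G" for C
    unfolding lhsC_def rhsC_def W_def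
  proof (rule real_ineq)
    show "0 < \<alpha>" "0 < \<mu>" "0 < real \<tau>" "0 < L C" "0 < real n" "0 < p C"
      using alpha_pos mu_pos tau_pos L_pos[OF C] n_pos p_pos[OF C] by auto
    show "0 \<le> e" "0 \<le> (norm (a C))\<^sup>2" "0 \<le> (norm (d C))\<^sup>2" unfolding e_def by auto
    show "real \<tau> * \<mu> * e + (norm (a C))\<^sup>2 / (real \<tau> * L C) \<le> 2 * (a C \<bullet> (x - xs))"
      unfolding e_def a_def by (rule block_ineq[OF C])
    show "\<alpha> * (\<mu> + 4 * L C * real \<tau> / real n) \<le> p C" by (rule alpha_le'[OF C])
  qed
  have "(\<Sum>C'\<in>G. p C' * (\<Sum>C\<in>G. p C * saga_lyap n \<tau> gradf p L \<alpha> xs C (saga_step n gradf p \<alpha> (x, J) C')))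
      \<le> e + (\<Sum>C\<in>G. lhsC C)"
  proof -
    have "(\<Sum>C'\<in>G. p C' * (\<Sum>C\<in>G. p C * saga_lyap n \<tau> gradf p L \<alpha> xs C (saga_step n gradf p \<alpha> (x, J) C')))
      = e - 2 * \<alpha> * (\<Sum>C\<in>G. (1 / real n) * (a C \<bullet> (x - xs))) + \<alpha>\<^sup>2 * (\<Sum>C\<in>G. p C * (norm (gh C))\<^sup>2)
        + (\<Sum>C\<in>G. W C * (p C * (norm (a C))\<^sup>2 + (1 - p C) * (norm (d C))\<^sup>2))"
      unfolding LHS P1 P2 P3 ..
    also have "\<dots> \<le> e - 2 * \<alpha> * (\<Sum>C\<in>G. (1 / real n) * (a C \<bullet> (x - xs)))
        + \<alpha>\<^sup>2 * (\<Sum>C\<in>G. 2 * ((norm (a C))\<^sup>2 + (norm (d C))\<^sup>2) / ((real n)\<^sup>2 * p C))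
        + (\<Sum>C\<in>G. W C * (p C * (norm (a C))\<^sup>2 + (1 - p C) * (norm (d C))\<^sup>2))"
      using F4 by (simp add: mult_left_mono)
    also have "\<dots> = e + (\<Sum>C\<in>G. lhsC C)"
    proof -
      have hX: "(\<Sum>C\<in>G. - (2 * \<alpha> / real n) * (a C \<bullet> (x - xs))) = - (2 * \<alpha>) * (\<Sum>C\<in>G. (1 / real n) * (a C \<bullet> (x - xs)))"
        unfolding sum_distrib_left by (rule sum.cong) auto
      have hY: "(\<Sum>C\<in>G. 2 * \<alpha>\<^sup>2 * ((norm (a C))\<^sup>2 + (norm (d C))\<^sup>2) / ((real n)\<^sup>2 * p C))
          = \<alpha>\<^sup>2 * (\<Sum>C\<in>G. 2 * ((norm (a C))\<^sup>2 + (norm (d C))\<^sup>2) / ((real n)\<^sup>2 * p C))"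
        unfolding sum_distrib_left by (rule sum.cong) auto
      have hS: "(\<Sum>C\<in>G. lhsC C) = (\<Sum>C\<in>G. - (2 * \<alpha> / real n) * (a C \<bullet> (x - xs)))
          + (\<Sum>C\<in>G. 2 * \<alpha>\<^sup>2 * ((norm (a C))\<^sup>2 + (norm (d C))\<^sup>2) / ((real n)\<^sup>2 * p C))
          + (\<Sum>C\<in>G. W C * (p C * (norm (a C))\<^sup>2 + (1 - p C) * (norm (d C))\<^sup>2))"
        unfolding lhsC_def by (simp only: sum.distrib)
      show ?thesis unfolding hS hX hY by simp
    qed
    finally show ?thesis .
  qed
  also have "\<dots> \<le> e + (\<Sum>C\<in>G. rhsC C)" using per by (simp add: sum_mono)
  also have "\<dots> = (1 - \<mu> * \<alpha>) * (e + (\<Sum>C\<in>G. W C * (norm (d C))\<^sup>2))"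
  proof -
    have c1: "real (card G) * (real \<tau> / real n) = 1" using cardG np by (simp add: field_simps)
    have hX: "(\<Sum>C\<in>G. - \<mu> * \<alpha> * (real \<tau> / real n) * e) = - \<mu> * \<alpha> * e"
    proof -
      have "(\<Sum>C\<in>G. - \<mu> * \<alpha> * (real \<tau> / real n) * e) = real (card G) * (- \<mu> * \<alpha> * (real \<tau> / real n) * e)"
        by simp
      also have "\<dots> = (real (card G) * (real \<tau> / real n)) * (- \<mu> * \<alpha> * e)" by (simp only: mult_ac)
      also have "\<dots> = - \<mu> * \<alpha> * e" unfolding c1 by simp
      finally show ?thesis .
    qed
    have hY: "(\<Sum>C\<in>G. (1 - \<mu> * \<alpha>) * (W C * (norm (d C))\<^sup>2)) = (1 - \<mu> * \<alpha>) * (\<Sum>C\<in>G. W C * (norm (d C))\<^sup>2)"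
      by (simp only: sum_distrib_left)
    have "(\<Sum>C\<in>G. rhsC C) = - \<mu> * \<alpha> * e + (1 - \<mu> * \<alpha>) * (\<Sum>C\<in>G. W C * (norm (d C))\<^sup>2)"
      unfolding rhsC_def sum.distrib hX hY ..
    then show ?thesis by (simp add: algebra_simps)
  qed
  also have "\<dots> = (1 - \<mu> * \<alpha>) * (\<Sum>C\<in>G. p C * saga_lyap n \<tau> gradf p L \<alpha> xs C (x, J))"
    unfolding Phi_eq e_def W_def d_def ..
  finally show ?thesis .
qed

end


lemma iter_cong: "(\<And>j. j < k \<Longrightarrow> s j = s' j) \<Longrightarrow> saga_iter n gradf p \<alpha> x0 J0 s k = saga_iter n gradf p \<alpha> x0 J0 s' k"
  by (induction k) auto

lemma unwind:
  fixes Q :: "'a::real_vector \<times> (nat \<Rightarrow> 'a) \<Rightarrow> real"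
  shows "(\<Sum>s\<in>PiE {..<Suc k} (\<lambda>_. G). (\<Prod>j<Suc k. p (s j)) * Q (saga_iter n gradf p \<alpha> x0 J0 s (Suc k)))
    = (\<Sum>s\<in>PiE {..<k} (\<lambda>_. G). (\<Prod>j<k. p (s j)) *
         (\<Sum>C\<in>G. p C * Q (saga_step n gradf p \<alpha> (saga_iter n gradf p \<alpha> x0 J0 s k) C)))"
proof -
  let ?h = "\<lambda>s. (\<Prod>j<Suc k. p (s j)) * Q (saga_iter n gradf p \<alpha> x0 J0 s (Suc k))"
  have ins: "{..<Suc k} = insert k {..<k}" by auto
  have inj: "inj_on (\<lambda>(y, g). g(k := y)) ((\<lambda>_. G) k \<times> PiE {..<k} (\<lambda>_. G))"
    by (rule inj_combinator) simp
  have "(\<Sum>s\<in>PiE {..<Suc k} (\<lambda>_. G). ?h s) = (\<Sum>s\<in>(\<lambda>(y, g). g(k := y)) ` (G \<times> PiE {..<k} (\<lambda>_. G)). ?h s)"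
    unfolding ins PiE_insert_eq by simp
  also have "\<dots> = (\<Sum>yg\<in>G \<times> PiE {..<k} (\<lambda>_. G). ?h ((\<lambda>(y, g). g(k := y)) yg))"
    using sum.reindex[OF inj, of ?h] by (simp only: comp_def)
  also have "\<dots> = (\<Sum>C\<in>G. \<Sum>s\<in>PiE {..<k} (\<lambda>_. G). ?h (s(k := C)))"
    unfolding sum.cartesian_product by (rule sum.cong) (auto split: prod.splits)
  also have "\<dots> = (\<Sum>s\<in>PiE {..<k} (\<lambda>_. G). \<Sum>C\<in>G. ?h (s(k := C)))"
    by (rule sum.swap)
  also have "\<dots> = (\<Sum>s\<in>PiE {..<k} (\<lambda>_. G). (\<Prod>j<k. p (s j)) *
         (\<Sum>C\<in>G. p C * Q (saga_step n gradf p \<alpha> (saga_iter n gradf p \<alpha> x0 J0 s k) C)))"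
  proof (rule sum.cong)
    fix s assume s: "s \<in> PiE {..<k} (\<lambda>_. G)"
    have hC: "?h (s(k := C)) = (\<Prod>j<k. p (s j)) * (p C * Q (saga_step n gradf p \<alpha> (saga_iter n gradf p \<alpha> x0 J0 s k) C))" for C
    proof -
      have pr: "(\<Prod>j<Suc k. p ((s(k := C)) j)) = p C * (\<Prod>j<k. p (s j))"
        by (simp add: prod.lessThan_Suc)
      have it: "saga_iter n gradf p \<alpha> x0 J0 (s(k := C)) k = saga_iter n gradf p \<alpha> x0 J0 s k"
        by (rule iter_cong) simp
      show ?thesis by (simp add: pr it)
    qed
    then show "(\<Sum>C\<in>G. ?h (s(k := C))) = (\<Prod>j<k. p (s j)) *
         (\<Sum>C\<in>G. p C * Q (saga_step n gradf p \<alpha> (saga_iter n gradf p \<alpha> x0 J0 s k) C))"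
      unfolding sum_distrib_left by (intro sum.cong refl hC)
  qed simp
  finally show ?thesis .
qed

context saga begin

lemma Phi_nonneg: "0 \<le> (\<Sum>C\<in>G. p C * saga_lyap n \<tau> gradf p L \<alpha> xs C (x, J))"
  unfolding Phi_eq
  by (intro add_nonneg_nonneg sum_nonneg mult_nonneg_nonneg divide_nonneg_nonneg)
     (use alpha_pos tau_pos L_pos p_pos in \<open>auto intro!: mult_nonneg_nonneg less_imp_le\<close>)

lemma rate_nonneg: "0 \<le> 1 - \<mu> * \<alpha>"
proof -
  obtain C where C: "C \<in> G" using G_ne by auto
  have "\<alpha> * (\<mu> + 4 * L C * real \<tau> / real n) \<le> p C" by (rule alpha_le'[OF C])
  moreover have "\<alpha> * (4 * L C * real \<tau> / real n) \<ge> 0" using alpha_pos L_pos[OF C] by simp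
  moreover have "p C \<le> 1"
    using p_sum sum.remove[OF finG C, of p] sum_nonneg[of "G - {C}" p] p_pos by force
  ultimately show ?thesis by (simp add: algebra_simps)
qed

lemma E_nonneg: "0 \<le> saga_expected_lyap n \<tau> gradf G p L \<alpha> x0 J0 xs k"
  unfolding saga_expected_lyap_def
proof (rule sum_nonneg)
  fix s assume s: "s \<in> PiE {..<k} (\<lambda>_. G)"
  have pn: "0 \<le> (\<Prod>j<k. p (s j))"
  proof (rule prod_nonneg)
    fix j assume "j \<in> {..<k}"
    then have "s j \<in> G" using s by auto
    then show "0 \<le> p (s j)" using p_pos by force
  qed
  have "0 \<le> (\<Sum>C\<in>G. p C * saga_lyap n \<tau> gradf p L \<alpha> xs C (saga_iter n gradf p \<alpha> x0 J0 s k))"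
    using Phi_nonneg[of "fst (saga_iter n gradf p \<alpha> x0 J0 s k)" "snd (saga_iter n gradf p \<alpha> x0 J0 s k)"] by simp
  then show "0 \<le> (\<Prod>j<k. p (s j)) * (\<Sum>C\<in>G. p C * saga_lyap n \<tau> gradf p L \<alpha> xs C (saga_iter n gradf p \<alpha> x0 J0 s k))"
    using pn by simp
qed

lemma E_step: "saga_expected_lyap n \<tau> gradf G p L \<alpha> x0 J0 xs (Suc k)
   \<le> (1 - \<mu> * \<alpha>) * saga_expected_lyap n \<tau> gradf G p L \<alpha> x0 J0 xs k"
proof -
  let ?Phi = "\<lambda>xJ. (\<Sum>C\<in>G. p C * saga_lyap n \<tau> gradf p L \<alpha> xs C xJ)"
  have "saga_expected_lyap n \<tau> gradf G p L \<alpha> x0 J0 xs (Suc k)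
     = (\<Sum>s\<in>PiE {..<k} (\<lambda>_. G). (\<Prod>j<k. p (s j)) *
         (\<Sum>C'\<in>G. p C' * ?Phi (saga_step n gradf p \<alpha> (saga_iter n gradf p \<alpha> x0 J0 s k) C')))"
    unfolding saga_expected_lyap_def by (rule unwind)
  also have "\<dots> \<le> (\<Sum>s\<in>PiE {..<k} (\<lambda>_. G). (\<Prod>j<k. p (s j)) * ((1 - \<mu> * \<alpha>) * ?Phi (saga_iter n gradf p \<alpha> x0 J0 s k)))"
  proof (rule sum_mono)
    fix s assume s: "s \<in> PiE {..<k} (\<lambda>_. G)"
    have pn: "0 \<le> (\<Prod>j<k. p (s j))"
    proof (rule prod_nonneg)
      fix j assume "j \<in> {..<k}"
      then have "s j \<in> G" using s by auto
      then show "0 \<le> p (s j)" using p_pos by force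
    qed
    obtain x J where xJ: "saga_iter n gradf p \<alpha> x0 J0 s k = (x, J)" by (cases "saga_iter n gradf p \<alpha> x0 J0 s k")
    show "(\<Prod>j<k. p (s j)) * (\<Sum>C'\<in>G. p C' * ?Phi (saga_step n gradf p \<alpha> (saga_iter n gradf p \<alpha> x0 J0 s k) C'))
        \<le> (\<Prod>j<k. p (s j)) * ((1 - \<mu> * \<alpha>) * ?Phi (saga_iter n gradf p \<alpha> x0 J0 s k))"
      unfolding xJ using pn one_step[of x J] by (intro mult_left_mono) auto
  qed
  also have "\<dots> = (1 - \<mu> * \<alpha>) * saga_expected_lyap n \<tau> gradf G p L \<alpha> x0 J0 xs k"
    unfolding saga_expected_lyap_def by (simp add: sum_distrib_left mult.left_commute)
  finally show ?thesis .
qed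

lemma E_rate: "saga_expected_lyap n \<tau> gradf G p L \<alpha> x0 J0 xs k
   \<le> (1 - \<mu> * \<alpha>) ^ k * saga_expected_lyap n \<tau> gradf G p L \<alpha> x0 J0 xs 0"
proof (induction k)
  case 0 then show ?case by simp
next
  case (Suc k)
  have "saga_expected_lyap n \<tau> gradf G p L \<alpha> x0 J0 xs (Suc k)
     \<le> (1 - \<mu> * \<alpha>) * saga_expected_lyap n \<tau> gradf G p L \<alpha> x0 J0 xs k" by (rule E_step)
  also have "\<dots> \<le> (1 - \<mu> * \<alpha>) * ((1 - \<mu> * \<alpha>) ^ k * saga_expected_lyap n \<tau> gradf G p L \<alpha> x0 J0 xs 0)"
    using Suc.IH rate_nonneg by (rule mult_left_mono)
  finally show ?case by (simp add: mult.assoc)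
qed

lemma E_eps:
  assumes aeq: "\<alpha> = Min ((\<lambda>C. p C / (\<mu> + 4 * L C * real \<tau> / real n)) ` G)"
    and eps: "\<epsilon> > 0"
    and kge: "real k \<ge> Max ((\<lambda>C. 1 / p C + 4 * L C / \<mu> * (real \<tau> / (real n * p C))) ` G) * ln (1 / \<epsilon>)"
  shows "saga_expected_lyap n \<tau> gradf G p L \<alpha> x0 J0 xs k \<le> \<epsilon> * saga_expected_lyap n \<tau> gradf G p L \<alpha> x0 J0 xs 0"
proof -
  define h where "h C = 1 / p C + 4 * L C / \<mu> * (real \<tau> / (real n * p C))" for C
  define M where "M = Max (h ` G)"
  have np: "real n > 0" using n_pos by simp
  have hpos: "h C > 0" if "C \<in> G" for C
    unfolding h_def using p_pos[OF that] L_pos[OF that] mu_pos tau_pos np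
    by (intro add_pos_nonneg) (auto intro!: mult_nonneg_nonneg divide_nonneg_nonneg)
  have rel: "p C / (\<mu> + 4 * L C * real \<tau> / real n) = 1 / (\<mu> * h C)" if "C \<in> G" for C
  proof -
    have pp: "p C > 0" using p_pos[OF that] .
    have e1: "\<mu> * h C = (\<mu> * real n + 4 * L C * real \<tau>) / (real n * p C)"
      unfolding h_def using pp np mu_pos by (simp add: field_simps)
    have e2: "\<mu> + 4 * L C * real \<tau> / real n = (\<mu> * real n + 4 * L C * real \<tau>) / real n"
      using np by (simp add: field_simps)
    show ?thesis unfolding e1 e2 using pp np by simp
  qed
  obtain C1 where C1: "C1 \<in> G" "\<alpha> = p C1 / (\<mu> + 4 * L C1 * real \<tau> / real n)"
  proof -
    have "Min ((\<lambda>C. p C / (\<mu> + 4 * L C * real \<tau> / real n)) ` G) \<in> (\<lambda>C. p C / (\<mu> + 4 * L C * real \<tau> / real n)) ` G"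
      by (rule Min_in) (use finG G_ne in auto)
    then show ?thesis using that aeq by auto
  qed
  have hM: "h C1 \<le> M" unfolding M_def by (rule Max_ge) (use finG C1 in auto)
  have Mpos: "M > 0" using hM hpos[OF C1(1)] by linarith
  have ma: "\<mu> * \<alpha> = 1 / h C1" using C1 rel[OF C1(1)] mu_pos by simp
  have ma2: "\<mu> * \<alpha> \<ge> 1 / M" unfolding ma using hpos[OF C1(1)] hM by (intro divide_left_mono) auto
  have kM: "real k / M \<ge> ln (1 / \<epsilon>)" using kge Mpos unfolding M_def h_def by (simp add: pos_le_divide_eq mult.commute)
  have kk: "\<mu> * \<alpha> * real k \<ge> ln (1 / \<epsilon>)"
  proof -
    have "real k * (1 / M) \<le> real k * (\<mu> * \<alpha>)" using ma2 by (intro mult_left_mono) auto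
    then show ?thesis using kM by (simp add: mult.commute)
  qed
  have "(1 - \<mu> * \<alpha>) ^ k \<le> exp (- (\<mu> * \<alpha>)) ^ k"
    using rate_nonneg by (intro power_mono) (use exp_ge_add_one_self[of "- (\<mu> * \<alpha>)"] in auto)
  also have "\<dots> = exp (- (\<mu> * \<alpha> * real k))" by (simp add: exp_of_nat_mult[symmetric] mult.commute)
  also have "\<dots> \<le> exp (- ln (1 / \<epsilon>))" using kk by simp
  also have "\<dots> = \<epsilon>" using eps by (simp add: ln_div)
  finally have r: "(1 - \<mu> * \<alpha>) ^ k \<le> \<epsilon>" .
  have "saga_expected_lyap n \<tau> gradf G p L \<alpha> x0 J0 xs k \<le> (1 - \<mu> * \<alpha>) ^ k * saga_expected_lyap n \<tau> gradf G p L \<alpha> x0 J0 xs 0"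
    by (rule E_rate)
  also have "\<dots> \<le> \<epsilon> * saga_expected_lyap n \<tau> gradf G p L \<alpha> x0 J0 xs 0"
    using r E_nonneg by (rule mult_right_mono)
  finally show ?thesis .
qed

end

theorem theorem5p2:
  fixes n \<tau> :: nat
    and f :: "nat \<Rightarrow> 'a::euclidean_space \<Rightarrow> real"
    and gradf :: "nat \<Rightarrow> 'a \<Rightarrow> 'a"
    and xs x0 :: 'a
    and J0 :: "nat \<Rightarrow> 'a"
    and G :: "nat set set"
    and p L :: "nat set \<Rightarrow> real"
    and \<mu> \<alpha> :: real
  assumes n_pos: "n > 0"
    and grad: "\<And>i x. i < n \<Longrightarrow> (f i has_derivative (\<lambda>h. gradf i x \<bullet> h)) (at x)"
    and minimizer: "\<And>x. (1 / real n) * (\<Sum>i<n. f i xs) \<le> (1 / real n) * (\<Sum>i<n. f i x)"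
    and partition: "partition_on {..<n} G"
    and block_size: "\<And>C. C \<in> G \<Longrightarrow> card C = \<tau>"
    and p_pos: "\<And>C. C \<in> G \<Longrightarrow> p C > 0"
    and p_sum: "(\<Sum>C\<in>G. p C) = 1"
    and mu_pos: "\<mu> > 0"
    and smooth: "\<And>C. C \<in> G \<Longrightarrow> smooth_with_grad (gradC gradf C) (L C)"
    and strconv: "\<And>C. C \<in> G \<Longrightarrow> strongly_convex_with_grad (fC f C) (gradC gradf C) \<mu>"
    and alpha_pos: "\<alpha> > 0"
    and alpha_le: "\<alpha> \<le> Min ((\<lambda>C. p C / (\<mu> + 4 * L C * real \<tau> / real n)) ` G)"
  shows "(\<forall>k. saga_expected_lyap n \<tau> gradf G p L \<alpha> x0 J0 xs k
              \<le> (1 - \<mu> * \<alpha>) ^ k * saga_expected_lyap n \<tau> gradf G p L \<alpha> x0 J0 xs 0)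
       \<and> (\<alpha> = Min ((\<lambda>C. p C / (\<mu> + 4 * L C * real \<tau> / real n)) ` G) \<longrightarrow>
           (\<forall>k \<epsilon>. \<epsilon> > 0 \<longrightarrow>
              real k \<ge> Max ((\<lambda>C. 1 / p C + 4 * L C / \<mu> * (real \<tau> / (real n * p C))) ` G)
                         * ln (1 / \<epsilon>) \<longrightarrow>
              saga_expected_lyap n \<tau> gradf G p L \<alpha> x0 J0 xs k
                \<le> \<epsilon> * saga_expected_lyap n \<tau> gradf G p L \<alpha> x0 J0 xs 0))"
proof -
  interpret saga n \<tau> f gradf xs G p L \<mu> \<alpha>
    by (unfold_locales; fact n_pos grad minimizer partition block_size p_pos p_sum mu_pos smooth strconv alpha_pos alpha_le)
  show ?thesis
  proof (intro conjI allI impI)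
    fix k
    show "saga_expected_lyap n \<tau> gradf G p L \<alpha> x0 J0 xs k
              \<le> (1 - \<mu> * \<alpha>) ^ k * saga_expected_lyap n \<tau> gradf G p L \<alpha> x0 J0 xs 0"
      by (rule E_rate)
  next
    fix k \<epsilon>
    assume "\<alpha> = Min ((\<lambda>C. p C / (\<mu> + 4 * L C * real \<tau> / real n)) ` G)" "\<epsilon> > 0"
      "real k \<ge> Max ((\<lambda>C. 1 / p C + 4 * L C / \<mu> * (real \<tau> / (real n * p C))) ` G) * ln (1 / \<epsilon>)"
    then show "saga_expected_lyap n \<tau> gradf G p L \<alpha> x0 J0 xs k
                \<le> \<epsilon> * saga_expected_lyap n \<tau> gradf G p L \<alpha> x0 J0 xs 0"
      by (rule E_eps)
  qed
qed

end
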